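(* $L_{\text{mpal}}$ can be verified with bounded error $\epsilon$ by an ADfA with $|\Sigma|+2$ affine states. Moreover, the protocol achieves perfect completeness.
   Context: $L_{\text{mpal}}=\{x \sigma x^R\mid x\in \Sigma^*, \sigma\in \Sigma\}$, and $\epsilon<1/2$ is rational. An affine state of an $m$-state affine register is a vector $v\in\mathbb{R}^m$ whose entries sum to $1$; affine operators are real matrices whose columns each sum to $1$; weighting observes basis state $e_j$ with probability $|v_j|/\|v\|_1$. A (one-way) ADfA is a deterministic finite automaton reading the input $¢ w\$$ (with left end-marker ¢ and right end-marker \$) left to right in real time, equipped with finitely many affine registers updated by affine operators with rational entries (unless stated otherwise) depending on the deterministic state and scanned symbol; after reading \$, if the deterministic state is accepting, each register is weighted once and the input is accepted iff every observed outcome lies in that register's accepting set. The ADfA acts as verifier in an Arthur–Merlin interactive proof system: it exchanges symbols with an all-powerful prover through a communication cell and reveals all its deterministic states, head moves and weighting outcomes to the prover (public coins). $V$ verifies $L$ with error $\epsilon$ if there is a prover such that every $w\in L$ is accepted with probability at least $1-\epsilon$, and for every $w\notin L$ and every prover, $w$ is rejected with probability at least $1-\epsilon$. Perfect completeness means every $w\in L$ is accepted with probability $1$. *)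

theory Defs
  imports Complex_Main
begin

datatype 'a tape = LEnd | Sym 'a | REnd

definition tape_of :: "'a list \<Rightarrow> 'a tape list" where
  "tape_of w = LEnd # map Sym w @ [REnd]"

definition L_mpal :: "'a list set" where
  "L_mpal = {x @ [s] @ rev x | x s. True}"

text \<open>There are nregs affine
 registers; register i has dim i affine states (indices 0..dim i - 1).
 op i q s g is the affine operator (matrix, row/column indices) applied to register i
 when in deterministic state q, scanning s, with prover's symbol g in the
 communication cell. racc i is the accepting set of register i.\<close>
record 'a adfa =
  states :: "nat set"
  start :: nat
  accepting :: "nat set"
  comm :: "nat set"
  delta :: "nat \<Rightarrow> 'a tape \<Rightarrow> nat \<Rightarrow> nat"
  nregs :: nat
  dim :: "nat \<Rightarrow> nat"
  op :: "nat \<Rightarrow> nat \<Rightarrow> 'a tape \<Rightarrow> nat \<Rightarrow> nat \<Rightarrow> nat \<Rightarrow> real"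
  racc :: "nat \<Rightarrow> nat set"

definition affine_operator :: "nat \<Rightarrow> (nat \<Rightarrow> nat \<Rightarrow> real) \<Rightarrow> bool" where
  "affine_operator m A \<longleftrightarrow>
     (\<forall>a<m. \<forall>b<m. A a b \<in> \<rat>) \<and> (\<forall>b<m. (\<Sum>a<m. A a b) = 1)"

definition wf_adfa :: "'a adfa \<Rightarrow> bool" where
  "wf_adfa V \<longleftrightarrow>
     finite (states V) \<and> start V \<in> states V \<and> accepting V \<subseteq> states V \<and>
     finite (comm V) \<and> comm V \<noteq> {} \<and>
     (\<forall>q\<in>states V. \<forall>s. \<forall>g\<in>comm V. delta V q s g \<in> states V) \<and>
     (\<forall>i<nregs V. dim V i \<ge> 1 \<and> racc V i \<subseteq> {..<dim V i} \<and>
        (\<forall>q\<in>states V. \<forall>s. \<forall>g\<in>comm V. affine_operator (dim V i) (op V i q s g)))"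

definition num_affine_states :: "'a adfa \<Rightarrow> nat" where
  "num_affine_states V = (\<Sum>i<nregs V. dim V i)"

definition apply_op :: "nat \<Rightarrow> (nat \<Rightarrow> nat \<Rightarrow> real) \<Rightarrow> (nat \<Rightarrow> real) \<Rightarrow> (nat \<Rightarrow> real)" where
  "apply_op m A v = (\<lambda>a. \<Sum>b<m. A a b * v b)"

fun run :: "'a adfa \<Rightarrow> nat \<times> (nat \<Rightarrow> nat \<Rightarrow> real) \<Rightarrow> ('a tape \<times> nat) list
              \<Rightarrow> nat \<times> (nat \<Rightarrow> nat \<Rightarrow> real)" where
  "run V c [] = c"
| "run V (q, R) ((s, g) # xs) =
     run V (delta V q s g, (\<lambda>i. apply_op (dim V i) (op V i q s g) (R i))) xs"

definition init_config :: "'a adfa \<Rightarrow> nat \<times> (nat \<Rightarrow> nat \<Rightarrow> real)" where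
  "init_config V = (start V, (\<lambda>i j. if j = 0 then 1 else 0))"

text \<open>A prover sees the input and the history of the (deterministic) interaction,
 which is determined by the input and its own previous answers.\<close>
type_synonym 'a prover = "'a list \<Rightarrow> nat list \<Rightarrow> nat"

definition valid_prover :: "'a adfa \<Rightarrow> 'a prover \<Rightarrow> bool" where
  "valid_prover V P \<longleftrightarrow> (\<forall>w hs. P w hs \<in> comm V)"

fun responses :: "'a prover \<Rightarrow> 'a list \<Rightarrow> nat \<Rightarrow> nat list" where
  "responses P w 0 = []"
| "responses P w (Suc n) = (let hs = responses P w n in hs @ [P w hs])"

definition final_config :: "'a adfa \<Rightarrow> 'a prover \<Rightarrow> 'a list \<Rightarrow> nat \<times> (nat \<Rightarrow> nat \<Rightarrow> real)" where
  "final_config V P w =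
     run V (init_config V) (zip (tape_of w) (responses P w (length w + 2)))"

definition weight_acc :: "nat \<Rightarrow> nat set \<Rightarrow> (nat \<Rightarrow> real) \<Rightarrow> real" where
  "weight_acc m A v = (\<Sum>j\<in>A. \<bar>v j\<bar>) / (\<Sum>j<m. \<bar>v j\<bar>)"

definition accept_prob :: "'a adfa \<Rightarrow> 'a prover \<Rightarrow> 'a list \<Rightarrow> real" where
  "accept_prob V P w =
     (let (q, R) = final_config V P w in
      if q \<in> accepting V then (\<Prod>i<nregs V. weight_acc (dim V i) (racc V i) (R i)) else 0)"

definition verifies_with_error :: "'a adfa \<Rightarrow> 'a list set \<Rightarrow> real \<Rightarrow> bool" where
  "verifies_with_error V L \<epsilon> \<longleftrightarrow>
     (\<exists>P. valid_prover V P \<and> (\<forall>w\<in>L. accept_prob V P w \<ge> 1 - \<epsilon>)) \<and>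
     (\<forall>w. w \<notin> L \<longrightarrow> (\<forall>P. valid_prover V P \<longrightarrow> 1 - accept_prob V P w \<ge> 1 - \<epsilon>))"

definition perfect_completeness :: "'a adfa \<Rightarrow> 'a list set \<Rightarrow> bool" where
  "perfect_completeness V L \<longleftrightarrow>
     (\<exists>P. valid_prover V P \<and> (\<forall>w\<in>L. accept_prob V P w = 1))"

end

theory Submission
  imports Defs
begin

definition amat :: "real \<Rightarrow> real \<Rightarrow> real \<Rightarrow> real \<Rightarrow> real \<Rightarrow> real \<Rightarrow> nat \<Rightarrow> nat \<Rightarrow> real" where
  "amat p0 p1 p2 p3 p4 p5 a c =
    (if c < 3 then
       (let r1 = (if c = 0 then p0 else if c = 1 then p0 + p1 else p0 + p2);
            r2 = (if c = 0 then p3 else if c = 1 then p3 + p4 else p3 + p5)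
        in if a = 0 then 1 - r1 - r2 else if a = 1 then r1 else if a = 2 then r2 else 0)
     else (if a = c then 1 else 0))"

definition vecR :: "real \<Rightarrow> real \<Rightarrow> nat \<Rightarrow> real" where
  "vecR A P = (\<lambda>j. if j = 0 then 1 - A - P else if j = 1 then A else if j = 2 then P else 0)"

lemma sum_lt3:
  fixes f :: "nat \<Rightarrow> real"
  assumes "3 \<le> m" "\<And>j. j \<ge> 3 \<Longrightarrow> f j = 0"
  shows "(\<Sum>j<m. f j) = f 0 + f 1 + f 2"
proof -
  have "(\<Sum>j<m. f j) = (\<Sum>j<3. f j)"
    using assms by (intro sum.mono_neutral_right) auto
  also have "\<dots> = f 0 + f 1 + f 2" by (simp add: numeral_3_eq_3 numeral_2_eq_2)
  finally show ?thesis .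
qed

lemma apply_amat:
  assumes "3 \<le> m"
  shows "apply_op m (amat p0 p1 p2 p3 p4 p5) (vecR A P) =
         vecR (p0 + p1 * A + p2 * P) (p3 + p4 * A + p5 * P)"
proof
  fix a
  have h: "apply_op m (amat p0 p1 p2 p3 p4 p5) (vecR A P) a =
        amat p0 p1 p2 p3 p4 p5 a 0 * vecR A P 0 + amat p0 p1 p2 p3 p4 p5 a 1 * vecR A P 1
        + amat p0 p1 p2 p3 p4 p5 a 2 * vecR A P 2"
    unfolding apply_op_def by (rule sum_lt3[OF assms]) (simp add: vecR_def)
  show "apply_op m (amat p0 p1 p2 p3 p4 p5) (vecR A P) a =
         vecR (p0 + p1 * A + p2 * P) (p3 + p4 * A + p5 * P) a"
    unfolding h by (simp add: amat_def vecR_def Let_def algebra_simps)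
qed

lemma affine_amat:
  assumes "3 \<le> m" "p0 \<in> \<rat>" "p1 \<in> \<rat>" "p2 \<in> \<rat>" "p3 \<in> \<rat>" "p4 \<in> \<rat>" "p5 \<in> \<rat>"
  shows "affine_operator m (amat p0 p1 p2 p3 p4 p5)"
  unfolding affine_operator_def
proof (intro conjI allI impI)
  fix a b assume "a < m" "b < m"
  show "amat p0 p1 p2 p3 p4 p5 a b \<in> \<rat>"
    using assms by (auto simp: amat_def Let_def)
next
  fix b assume b: "b < m"
  show "(\<Sum>a<m. amat p0 p1 p2 p3 p4 p5 a b) = 1"
  proof (cases "b < 3")
    case True
    have "(\<Sum>a<m. amat p0 p1 p2 p3 p4 p5 a b) =
      amat p0 p1 p2 p3 p4 p5 0 b + amat p0 p1 p2 p3 p4 p5 1 b + amat p0 p1 p2 p3 p4 p5 2 b"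
      using True by (intro sum_lt3[OF assms(1)]) (auto simp: amat_def)
    then show ?thesis using True by (simp add: amat_def Let_def)
  next
    case False
    have "(\<Sum>a<m. amat p0 p1 p2 p3 p4 p5 a b) = (\<Sum>a\<in>{b}. amat p0 p1 p2 p3 p4 p5 a b)"
      using b False by (intro sum.mono_neutral_right) (auto simp: amat_def)
    then show ?thesis using False by (simp add: amat_def)
  qed
qed

lemma weight_vecR:
  assumes "3 \<le> m"
  shows "weight_acc m {0} (vecR X (-X)) = 1 / (1 + 2 * \<bar>X\<bar>)"
proof -
  have "(\<Sum>j<m. \<bar>vecR X (-X) j\<bar>) = \<bar>vecR X (-X) 0\<bar> + \<bar>vecR X (-X) 1\<bar> + \<bar>vecR X (-X) 2\<bar>"
    by (rule sum_lt3[OF assms]) (simp add: vecR_def)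
  then show ?thesis by (simp add: weight_acc_def vecR_def)
qed

fun lv :: "int \<Rightarrow> int list \<Rightarrow> int" where
  "lv b [] = 0"
| "lv b (d # ds) = d + b * lv b ds"

lemma lv_snoc: "lv b (xs @ [d]) = lv b xs + b ^ length xs * d"
  by (induction xs) (auto simp: algebra_simps)

lemma lv_pos: "\<forall>d\<in>set xs. 1 \<le> d \<and> d < b \<Longrightarrow> b \<ge> 2 \<Longrightarrow> lv b xs \<ge> 0"
  by (induction xs) auto

lemma lv_inj:
  assumes "b \<ge> 2" "\<forall>d\<in>set xs. 1 \<le> d \<and> d < b" "\<forall>d\<in>set ys. 1 \<le> d \<and> d < b"
    "lv b xs = lv b ys"
  shows "xs = ys"
  using assms
proof (induction xs arbitrary: ys)
  case Nil
  then show ?case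
    by (cases ys) (auto, smt (verit, best) lv_pos mult_nonneg_nonneg)
next
  case (Cons d ds)
  note IH = Cons.IH and pr = Cons.prems
  show ?case
  proof (cases ys)
    case Nil
    then show ?thesis using pr lv_pos[of ds b]
      by simp (smt (verit, best) mult_nonneg_nonneg)
  next
    case (Cons e es)
    have eq: "d + b * lv b ds = e + b * lv b es" using Cons pr by simp
    have d1: "1 \<le> d" "d < b" using pr(2) by auto
    have e1: "1 \<le> e" "e < b" using pr(3) Cons by auto
    have "(d + b * lv b ds) mod b = d" using d1 by simp
    moreover have "(e + b * lv b es) mod b = e" using e1 by simp
    ultimately have de: "d = e" using eq by simp
    then have "b * lv b ds = b * lv b es" using eq by linarith
    then have "lv b ds = lv b es" using pr(1) by simp
    moreover have "\<forall>d\<in>set ds. 1 \<le> d \<and> d < b" using pr(2) by simp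
    moreover have "\<forall>d\<in>set es. 1 \<le> d \<and> d < b" using pr(3) Cons by simp
    ultimately have "ds = es" using IH[OF pr(1)] by blast
    then show ?thesis using de Cons by simp
  qed
qed


definition mydelta :: "nat \<Rightarrow> 'a tape \<Rightarrow> nat \<Rightarrow> nat" where
  "mydelta q s g = (case s of
      LEnd \<Rightarrow> (if q = 0 then 1 else 3)
    | Sym a \<Rightarrow> (if q = 1 then (if g = 0 then 1 else 2) else if q = 2 then 2 else 3)
    | REnd \<Rightarrow> (if q = 2 then 4 else 3))"

definition myop :: "('a \<Rightarrow> int) \<Rightarrow> int \<Rightarrow> real \<Rightarrow> nat \<Rightarrow> 'a tape \<Rightarrow> nat \<Rightarrow> nat \<Rightarrow> nat \<Rightarrow> real" where
  "myop ci bi K q s g = (case s of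
      LEnd \<Rightarrow> amat 0 1 0 0 0 1
    | Sym a \<Rightarrow> (if q = 1 then (if g = 0 then amat (of_int (ci a)) (of_int bi) 0 0 0 1
                               else amat 0 1 0 1 0 0)
               else if q = 2 then amat 0 1 (- of_int (ci a)) 0 0 (of_int bi)
               else amat 0 1 0 0 0 1)
    | REnd \<Rightarrow> (if q = 2 then amat 0 K 0 0 (-K) 0 else amat 0 1 0 0 0 1))"

definition myV :: "('a \<Rightarrow> int) \<Rightarrow> int \<Rightarrow> real \<Rightarrow> nat \<Rightarrow> 'a adfa" where
  "myV ci bi K m = \<lparr>states = {0..4}, start = 0, accepting = {4}, comm = {0,1},
      delta = mydelta, nregs = 1, dim = (\<lambda>_. m), op = (\<lambda>_. myop ci bi K), racc = (\<lambda>_. {0})\<rparr>"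

lemma run_step:
  "run (myV ci bi K m) (q, R) ((s, g) # xs) =
   run (myV ci bi K m) (mydelta q s g, \<lambda>i. apply_op m (myop ci bi K q s g) (R i)) xs"
  by (simp add: myV_def)

declare run.simps(2)[simp del]

lemma run_sink: "fst (run (myV ci bi K m) (3, R) xs) = 3"
proof (induction xs arbitrary: R)
  case Nil then show ?case by simp
next
  case (Cons x xs)
  obtain s g where "x = (s, g)" by force
  moreover have "mydelta 3 s g = 3" by (simp add: mydelta_def split: tape.split)
  ultimately show ?case using Cons by (simp add: run_step)
qed

lemma phase2:
  assumes "3 \<le> m" "R 0 = vecR A P" "length gs = length v"
    "run (myV ci bi K m) (2, R) (zip (map Sym v) gs @ [(REnd, g)]) = (q', R')"
  shows "q' = 4 \<and> R' 0 = vecR (K * (A - P * of_int (lv bi (map ci v))))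
                               (- (K * (A - P * of_int (lv bi (map ci v)))))"
  using assms
proof (induction v arbitrary: A P R gs)
  case Nil
  then have "q' = 4" "R' = (\<lambda>i. apply_op m (amat 0 K 0 0 (- K) 0) (R i))"
    by (auto simp add: run_step mydelta_def myop_def)
  then show ?case using Nil.prems by (simp add: apply_amat)
next
  case (Cons a v)
  obtain g0 gs' where gs: "gs = g0 # gs'" "length gs' = length v"
    using Cons.prems(3) by (cases gs) auto
  have R1: "(\<lambda>i. apply_op m (myop ci bi K 2 (Sym a) g0) (R i)) 0 =
     vecR (A - of_int (ci a) * P) (of_int bi * P)"
    using Cons.prems(1,2) by (simp add: myop_def apply_amat)
  have "run (myV ci bi K m) (2, \<lambda>i. apply_op m (myop ci bi K 2 (Sym a) g0) (R i))
          (zip (map Sym v) gs' @ [(REnd, g)]) = (q', R')"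
    using Cons.prems(4) gs by (simp add: run_step mydelta_def)
  from Cons.IH[OF Cons.prems(1) R1 gs(2) this]
  show ?case by (simp add: algebra_simps)
qed


lemma phase1:
  assumes "3 \<le> m" "R 0 = vecR A P" "length gs = length w"
    "run (myV ci bi K m) (1, R) (zip (map Sym w) gs @ [(REnd, g)]) = (q', R')" "q' = 4"
  shows "\<exists>u s v. w = u @ s # v \<and>
     R' 0 = vecR (K * (of_int bi ^ length u * A + of_int (lv bi (rev (map ci u))) - of_int (lv bi (map ci v))))
                (- (K * (of_int bi ^ length u * A + of_int (lv bi (rev (map ci u))) - of_int (lv bi (map ci v)))))"
  using assms
proof (induction w arbitrary: A P R gs)
  case Nil
  then have "run (myV ci bi K m) (3, \<lambda>i. apply_op m (myop ci bi K 1 REnd g) (R i)) [] = (q', R')"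
    by (simp add: run_step mydelta_def)
  then show ?case using Nil.prems by simp
next
  case (Cons a w)
  obtain g0 gs' where gs: "gs = g0 # gs'" "length gs' = length w"
    using Cons.prems(3) by (cases gs) auto
  show ?case
  proof (cases "g0 = 0")
    case True
    have R1: "(\<lambda>i. apply_op m (myop ci bi K 1 (Sym a) g0) (R i)) 0 =
       vecR (of_int (ci a) + of_int bi * A) P"
      using Cons.prems(1,2) True by (simp add: myop_def apply_amat)
    have "run (myV ci bi K m) (1, \<lambda>i. apply_op m (myop ci bi K 1 (Sym a) g0) (R i))
            (zip (map Sym w) gs' @ [(REnd, g)]) = (q', R')"
      using Cons.prems(4) gs True by (simp add: run_step mydelta_def)
    from Cons.IH[OF Cons.prems(1) R1 gs(2) this Cons.prems(5)]
    obtain u s v where uv: "w = u @ s # v" and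
      R': "R' 0 = vecR (K * (of_int bi ^ length u * (of_int (ci a) + of_int bi * A) + of_int (lv bi (rev (map ci u))) - of_int (lv bi (map ci v))))
                (- (K * (of_int bi ^ length u * (of_int (ci a) + of_int bi * A) + of_int (lv bi (rev (map ci u))) - of_int (lv bi (map ci v)))))"
      by blast
    have "of_int bi ^ length u * (of_int (ci a) + of_int bi * A) + of_int (lv bi (rev (map ci u)))
        = (of_int bi ^ length (a # u) * A + of_int (lv bi (rev (map ci (a # u)))) :: real)"
      by (simp add: lv_snoc algebra_simps)
    then show ?thesis using uv R' by (intro exI[of _ "a # u"] exI[of _ s] exI[of _ v]) simp
  next
    case False
    have R1: "(\<lambda>i. apply_op m (myop ci bi K 1 (Sym a) g0) (R i)) 0 = vecR A 1"
      using Cons.prems(1,2) False by (simp add: myop_def apply_amat)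
    have "run (myV ci bi K m) (2, \<lambda>i. apply_op m (myop ci bi K 1 (Sym a) g0) (R i))
            (zip (map Sym w) gs' @ [(REnd, g)]) = (q', R')"
      using Cons.prems(4) gs False by (simp add: run_step mydelta_def)
    from phase2[OF Cons.prems(1) R1 gs(2) this]
    show ?thesis by (intro exI[of _ "[]"] exI[of _ a] exI[of _ w]) simp
  qed
qed

lemma phase1c:
  assumes "3 \<le> m" "R 0 = vecR A P" "length gs = length v"
    "run (myV ci bi K m) (1, R) (zip (map Sym (u @ s # v)) (replicate (length u) 0 @ Suc 0 # gs) @ [(REnd, g)]) = (q', R')"
  shows "q' = 4 \<and>
     R' 0 = vecR (K * (of_int bi ^ length u * A + of_int (lv bi (rev (map ci u))) - of_int (lv bi (map ci v))))
                (- (K * (of_int bi ^ length u * A + of_int (lv bi (rev (map ci u))) - of_int (lv bi (map ci v)))))"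
  using assms
proof (induction u arbitrary: A P R)
  case Nil
  have R1: "(\<lambda>i. apply_op m (myop ci bi K 1 (Sym s) (Suc 0)) (R i)) 0 = vecR A 1"
    using Nil.prems(1,2) by (simp add: myop_def apply_amat)
  have "run (myV ci bi K m) (2, \<lambda>i. apply_op m (myop ci bi K 1 (Sym s) (Suc 0)) (R i))
          (zip (map Sym v) gs @ [(REnd, g)]) = (q', R')"
    using Nil.prems(4) by (simp add: run_step mydelta_def)
  from phase2[OF Nil.prems(1) R1 Nil.prems(3) this]
  show ?case by simp
next
  case (Cons a u)
  have R1: "(\<lambda>i. apply_op m (myop ci bi K 1 (Sym a) 0) (R i)) 0 =
     vecR (of_int (ci a) + of_int bi * A) P"
    using Cons.prems(1,2) by (simp add: myop_def apply_amat)
  have "run (myV ci bi K m) (1, \<lambda>i. apply_op m (myop ci bi K 1 (Sym a) 0) (R i))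
          (zip (map Sym (u @ s # v)) (replicate (length u) 0 @ Suc 0 # gs) @ [(REnd, g)]) = (q', R')"
    using Cons.prems(4) by (simp add: run_step mydelta_def)
  from Cons.IH[OF Cons.prems(1) R1 Cons.prems(3) this]
  have q: "q' = 4" and
    R': "R' 0 = vecR (K * (of_int bi ^ length u * (of_int (ci a) + of_int bi * A) + of_int (lv bi (rev (map ci u))) - of_int (lv bi (map ci v))))
                (- (K * (of_int bi ^ length u * (of_int (ci a) + of_int bi * A) + of_int (lv bi (rev (map ci u))) - of_int (lv bi (map ci v)))))"
    by auto
  have "of_int bi ^ length u * (of_int (ci a) + of_int bi * A) + of_int (lv bi (rev (map ci u)))
      = (of_int bi ^ length (a # u) * A + of_int (lv bi (rev (map ci (a # u)))) :: real)"
    by (simp add: lv_snoc algebra_simps)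
  then show ?case using q R' by simp
qed


lemma length_responses: "length (responses P w n) = n"
  by (induction n) (auto simp: Let_def)

lemma responses_honest:
  "responses (\<lambda>w hs. if length hs = d w then 1 else 0) w n = map (\<lambda>i. if i = d w then 1 else 0) [0..<n]"
  by (induction n) (auto simp: Let_def length_responses)

lemma honest_list:
  "map (\<lambda>i. if i = Suc k then 1 else 0) [0..<k + k + 3] =
   (0::nat) # (replicate k 0 @ Suc 0 # replicate k 0) @ [0]"
proof (rule nth_equalityI)
  fix i assume "i < length (map (\<lambda>i. if i = Suc k then 1 else (0::nat)) [0..<k + k + 3])"
  then have i: "i < k + k + 3" by simp
  show "map (\<lambda>i. if i = Suc k then 1 else (0::nat)) [0..<k + k + 3] ! i =
        ((0::nat) # (replicate k 0 @ Suc 0 # replicate k 0) @ [0]) ! i"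
    using i by (cases i) (auto simp: nth_append nth_Cons')
qed simp

lemma split_rs:
  assumes "length rs = n + 2"
  obtains g0 gs gl where "rs = g0 # gs @ [gl]" "length gs = n"
proof -
  obtain g0 rs' where 1: "rs = g0 # rs'" using assms by (cases rs) auto
  then have "rs' \<noteq> []" using assms by auto
  then obtain gs gl where "rs' = gs @ [gl]" by (cases rs' rule: rev_cases) auto
  then show ?thesis using that 1 assms by auto
qed

lemma final_run:
  assumes "3 \<le> m"
  obtains g0 gs gl R where "length gs = length w" "R 0 = vecR 0 0"
    "final_config (myV ci bi K m) P w = run (myV ci bi K m) (1, R) (zip (map Sym w) gs @ [(REnd, gl)])"
    "responses P w (length w + 2) = g0 # gs @ [gl]"
proof -
  obtain g0 gs gl where rs: "responses P w (length w + 2) = g0 # gs @ [gl]" "length gs = length w"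
    using split_rs[OF length_responses] by blast
  have z: "zip (tape_of w) (responses P w (length w + 2)) = (LEnd, g0) # (zip (map Sym w) gs @ [(REnd, gl)])"
    using rs by (simp add: tape_of_def)
  have i0: "(\<lambda>i. apply_op m (myop ci bi K 0 LEnd g0) (snd (init_config (myV ci bi K m)) i)) 0 = vecR 0 0"
  proof -
    have "snd (init_config (myV ci bi K m)) 0 = vecR 0 0"
      by (auto simp: init_config_def vecR_def)
    then show ?thesis using assms by (simp add: myop_def apply_amat)
  qed
  have "final_config (myV ci bi K m) P w = run (myV ci bi K m) (1, \<lambda>i. apply_op m (myop ci bi K 0 LEnd g0) (snd (init_config (myV ci bi K m)) i)) (zip (map Sym w) gs @ [(REnd, gl)])"
    unfolding final_config_def z
    by (simp add: init_config_def run_step mydelta_def) (simp add: myV_def)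
  then show ?thesis
    by (intro that[of gs "\<lambda>i. apply_op m (myop ci bi K 0 LEnd g0) (snd (init_config (myV ci bi K m)) i)" gl g0])
       (use rs i0 in auto)
qed


lemma accept_myV:
  "accept_prob (myV ci bi K m) P w =
    (let (q, R) = final_config (myV ci bi K m) P w in if q = 4 then weight_acc m {0} (R 0) else 0)"
proof -
  have f: "accepting (myV ci bi K m) = {4}" "nregs (myV ci bi K m) = 1"
    "adfa.dim (myV ci bi K m) = (\<lambda>_. m)" "racc (myV ci bi K m) = (\<lambda>_. {0})"
    by (simp_all add: myV_def)
  show ?thesis unfolding accept_prob_def f by (simp add: case_prod_beta)
qed

theorem theorem3:
  fixes \<epsilon> :: real
  assumes "\<epsilon> \<in> \<rat>" and "0 < \<epsilon>" and "\<epsilon> < 1/2"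
  shows "\<exists>V :: ('a::finite) adfa.
           wf_adfa V \<and> num_affine_states V = card (UNIV :: 'a set) + 2 \<and>
           verifies_with_error V (L_mpal :: 'a list set) \<epsilon> \<and>
           perfect_completeness V (L_mpal :: 'a list set)"
proof -
  define n where "n = card (UNIV :: 'a set)"
  have n1: "n \<ge> 1" unfolding n_def using finite_UNIV_card_ge_0[OF finite_UNIV[where 'a='a]] by linarith
  obtain h :: "'a \<Rightarrow> nat" where h: "bij_betw h UNIV {0..<n}"
    using ex_bij_betw_finite_nat[of "UNIV :: 'a set"] unfolding n_def by auto
  define ci where "ci a = int (h a) + 1" for a
  define bi where "bi = int n + 1"
  define K where "K = 1 / \<epsilon>"
  define m where "m = n + 2"
  define V where "V = (myV ci bi K m :: 'a adfa)"
  have m3: "3 \<le> m" using n1 unfolding m_def by simp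
  have Kq: "K \<in> \<rat>" using assms(1) unfolding K_def by simp
  have ci_rng: "1 \<le> ci a \<and> ci a < bi" for a
  proof -
    have "h a < n" using bij_betwE[OF h] by auto
    then show ?thesis unfolding ci_def bi_def by simp
  qed
  have ci_inj: "inj ci" using bij_betw_imp_inj_on[OF h] unfolding ci_def inj_on_def by auto
  have bi2: "bi \<ge> 2" using n1 unfolding bi_def by simp
  have wf: "wf_adfa V"
    unfolding wf_adfa_def V_def
  proof (intro conjI ballI allI impI)
    fix i q s g assume "i < nregs (myV ci bi K m)"
    show "affine_operator (adfa.dim (myV ci bi K m) i) (op (myV ci bi K m) i q s g)"
      using m3 Kq by (auto simp: myV_def myop_def split: tape.split intro!: affine_amat)
  qed (use m3 in \<open>auto simp: myV_def mydelta_def split: tape.split\<close>)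
  have nas: "num_affine_states V = n + 2"
    by (simp add: num_affine_states_def V_def myV_def m_def)
  have sound: "accept_prob V P w \<le> \<epsilon>" if w: "w \<notin> L_mpal" for P w
  proof -
    obtain g0 gs gl R where gs: "length gs = length w" "R 0 = vecR 0 0"
      "final_config V P w = run V (1, R) (zip (map Sym w) gs @ [(REnd, gl)])"
      using final_run[OF m3, of w ci bi K P] unfolding V_def by metis
    obtain q' R' where qR: "final_config V P w = (q', R')" by force
    show ?thesis
    proof (cases "q' = 4")
      case False then show ?thesis using qR assms(2) by (simp add: V_def accept_myV)
    next
      case True
      have rr: "run (myV ci bi K m) (1, R) (zip (map Sym w) gs @ [(REnd, gl)]) = (q', R')"
        using gs(3) qR unfolding V_def by simp
      from phase1[OF m3 gs(2) gs(1) rr True]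
      obtain u s v where uv: "w = u @ s # v" and
        R': "R' 0 = vecR (K * (of_int (lv bi (rev (map ci u))) - of_int (lv bi (map ci v))))
                (- (K * (of_int (lv bi (rev (map ci u))) - of_int (lv bi (map ci v)))))"
        unfolding V_def by auto
      define D where "D = lv bi (rev (map ci u)) - lv bi (map ci v)"
      have "D \<noteq> 0"
      proof
        assume "D = 0"
        then have "rev (map ci u) = map ci v"
          using lv_inj[OF bi2] ci_rng unfolding D_def by auto
        then have "map ci (rev u) = map ci v" by (simp add: rev_map)
        then have "v = rev u" using ci_inj by (simp add: inj_map_eq_map)
        then have "w \<in> L_mpal" using uv unfolding L_mpal_def by auto
        then show False using w by simp
      qed
      then have D1: "1 \<le> \<bar>real_of_int D\<bar>" by linarith
      have "accept_prob V P w = 1 / (1 + 2 * \<bar>K * of_int D\<bar>)"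
        using qR True R' m3 weight_vecR by (simp add: V_def accept_myV D_def)
      also have "\<dots> \<le> \<epsilon>"
      proof -
        have "\<bar>K * of_int D\<bar> = \<bar>of_int D\<bar> / \<epsilon>" using assms(2) by (simp add: K_def abs_mult)
        then have "\<epsilon> * \<bar>K * of_int D\<bar> \<ge> 1" using assms(2) D1 by simp
        then have "1 \<le> \<epsilon> * (1 + 2 * \<bar>K * of_int D\<bar>)" using assms(2) by (simp add: algebra_simps)
        then show ?thesis using assms(2) by (simp add: divide_le_eq add_pos_nonneg)
      qed
      finally show ?thesis .
    qed
  qed
  define Ph where "Ph = (\<lambda>(w::'a list) (hs::nat list). if length hs = length w div 2 + 1 then (1::nat) else 0)"
  have vp: "valid_prover V Ph" by (simp add: valid_prover_def V_def myV_def Ph_def)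
  have compl: "accept_prob V Ph w = 1" if w: "w \<in> L_mpal" for w
  proof -
    obtain x s where ws: "w = x @ [s] @ rev x" using w unfolding L_mpal_def by auto
    let ?k = "length x"
    have lw: "length w div 2 + 1 = Suc ?k" using ws by simp
    have "responses Ph w (length w + 2) = map (\<lambda>i. if i = Suc ?k then 1 else 0) [0..<?k + ?k + 3]"
      unfolding Ph_def using responses_honest[of "\<lambda>w. length w div 2 + 1" w] lw ws
      by (simp add: eval_nat_numeral)
    also have "\<dots> = 0 # (replicate ?k 0 @ Suc 0 # replicate ?k 0) @ [0]" by (rule honest_list)
    finally have rsp: "responses Ph w (length w + 2) = 0 # (replicate ?k 0 @ Suc 0 # replicate ?k 0) @ [0]" .
    obtain g0 gs gl R where gs: "length gs = length w" "R 0 = vecR 0 0"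
      "final_config V Ph w = run V (1, R) (zip (map Sym w) gs @ [(REnd, gl)])"
      "responses Ph w (length w + 2) = g0 # gs @ [gl]"
      using final_run[OF m3, of w ci bi K Ph] unfolding V_def by metis
    have gs_eq: "gs = replicate ?k 0 @ Suc 0 # replicate ?k 0" and gl: "gl = 0"
      using gs(4) rsp by auto
    obtain q' R' where qR: "final_config V Ph w = (q', R')" by force
    have "run (myV ci bi K m) (1, R) (zip (map Sym (x @ s # rev x)) (replicate (length x) 0 @ Suc 0 # replicate ?k 0) @ [(REnd, gl)]) = (q', R')"
      using gs(3) qR gs_eq ws unfolding V_def by simp
    from phase1c[OF m3 gs(2) _ this]
    have "q' = 4" "R' 0 = vecR (K * (of_int (lv bi (rev (map ci x))) - of_int (lv bi (map ci (rev x)))))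
                (- (K * (of_int (lv bi (rev (map ci x))) - of_int (lv bi (map ci (rev x))))))"
      by auto
    then have "q' = 4" "R' 0 = vecR 0 (- 0)" by (auto simp: rev_map)
    then show ?thesis using qR m3 weight_vecR[OF m3, of 0] by (simp add: V_def accept_myV)
  qed
  have "verifies_with_error V L_mpal \<epsilon>"
    unfolding verifies_with_error_def using vp compl sound assms(2) by auto
  moreover have "perfect_completeness V L_mpal"
    unfolding perfect_completeness_def using vp compl by auto
  ultimately show ?thesis using wf nas unfolding n_def by blast
qed

end
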